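(* Let $S\subseteq\mathbb{R}^{n-1}$ and let $P\in\mathbb{R}[\mathbf{x};x_n]$ have degree $d_n$ in $x_n$, $P(\mathbf{x},x_n)=\sum_{k=0}^{d_n}c_k(\mathbf{x})x_n^k$. Suppose there exists $k\in\{0,\dots,d_n\}$ such that for all $\mathbf{x}\in S$: $c_{d_n-k}(\mathbf{x})\neq0$ and $c_{d_n-j}(\mathbf{x})=0$ for all integers $0\le j\le k-1$. Then $P$ is projectively delineable on $S$ if and only if $P$ is delineable on $S$.
   Context: Write $\mathbf{x}=(x_1,\dots,x_{n-1})$; for $\mathbf{x}_0\in\mathbb{R}^{n-1}$, $E_{\mathbf{x}_0}P$ is the univariate polynomial in $x_n$ obtained by substituting $\mathbf{x}_0$ for $\mathbf{x}$. $\mathbb{RP}^1$ is the quotient of $\mathbb{R}^2\setminus\{(0,0)\}$ by proportionality, with quotient topology; $(u:v)$ denotes the class of $(u,v)$; $\infty=(1:0)$. The homogenization of $P$ with respect to $d=\deg_{x_n}P$ is $H^{d}(P)(\mathbf{x},x_n,y)=\sum_kc_k(\mathbf{x})x_n^ky^{d-k}$. A projective root of a binary form $g(u,v)$ is $(u_0:v_0)$ with $g(u_0,v_0)=0$, and for $g\neq0$ its multiplicity is the largest $m$ with $(v_0u-u_0v)^m$ dividing $g$; projective roots of $E_{\mathbf{x}}P$ with respect to $d$ are those of $E_{\mathbf{x}}H^d(P)$. Define $Z_{\mathbb{R}}(P,S)=\{(\mathbf{x},x_n)\in S\times\mathbb{R}: P(\mathbf{x},x_n)=0\}$ and $Z_{\mathbb{RP}^1}(P,S)=\{(\mathbf{x},(x_n:y))\in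 S\times\mathbb{RP}^1: H^{d}(P)(\mathbf{x},x_n,y)=0\}$. $P$ is delineable on $S$ if there are $k\in\mathbb{N}$ and continuous $\theta_1,\dots,\theta_k:S\to\mathbb{R}$ with $Z_{\mathbb{R}}(P,S)$ equal to the disjoint union of the graphs of the $\theta_l$, and for each $l$ an $m_l\geq1$ such that for all $\mathbf{x}\in S$, $\theta_l(\mathbf{x})$ is a root of $E_{\mathbf{x}}P$ of multiplicity $m_l$. $P$ is projectively delineable on $S$ if there are $k\in\mathbb{N}$ and continuous $\theta_1,\dots,\theta_k:S\to\mathbb{RP}^1$ with $Z_{\mathbb{RP}^1}(P,S)$ equal to the disjoint union of the graphs of the $\theta_l$, and for each $l$ an $m_l\geq1$ such that for all $\mathbf{x}\in S$, $\theta_l(\mathbf{x})$ is a projective root of $E_{\mathbf{x}}P$ (with respect to $\deg_{x_n}P$) of multiplicity $m_l$; the $\theta_l$ are the projective root functions and their graphs the projective $P$-sections. *)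

theory Defs
  imports "HOL-Analysis.Analysis" "HOL-Library.Function_Algebras"
          "HOL-Computational_Algebra.Polynomial"
begin

inductive polyfun :: "(real ^ 'n \<Rightarrow> real) \<Rightarrow> bool" where
  polyfun_const: "polyfun (\<lambda>x. c)"
| polyfun_coord: "polyfun (\<lambda>x. x $ i)"
| polyfun_add: "polyfun f \<Longrightarrow> polyfun g \<Longrightarrow> polyfun (\<lambda>x. f x + g x)"
| polyfun_mult: "polyfun f \<Longrightarrow> polyfun g \<Longrightarrow> polyfun (\<lambda>x. f x * g x)"

text \<open>A polynomial P in R[x; x_n] is represented as a univariate polynomial in x_n
  whose coefficients c_k are polynomial functions of x (type
  (real^'n => real) poly, all coefficients satisfying polyfun).\<close>
definition is_mpoly :: "(real ^ 'n \<Rightarrow> real) poly \<Rightarrow> bool" where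
  "is_mpoly P \<longleftrightarrow> (\<forall>k. polyfun (coeff P k))"

definition evalx :: "(real ^ 'n \<Rightarrow> real) poly \<Rightarrow> real ^ 'n \<Rightarrow> real poly" where
  "evalx P x = map_poly (\<lambda>f. f x) P"

definition root_mult :: "real poly \<Rightarrow> real \<Rightarrow> nat \<Rightarrow> bool" where
  "root_mult p r m \<longleftrightarrow> p \<noteq> 0 \<and> poly p r = 0 \<and> order r p = m"

definition Z_R :: "(real ^ 'n \<Rightarrow> real) poly \<Rightarrow> (real ^ 'n) set \<Rightarrow> ((real ^ 'n) \<times> real) set" where
  "Z_R P S = {(x, t). x \<in> S \<and> poly (evalx P x) t = 0}"

definition delineable :: "(real ^ 'n \<Rightarrow> real) poly \<Rightarrow> (real ^ 'n) set \<Rightarrow> bool" where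
  "delineable P S \<longleftrightarrow>
     (\<exists>(k::nat) (\<theta>::nat \<Rightarrow> real ^ 'n \<Rightarrow> real) (m::nat \<Rightarrow> nat).
        (\<forall>l<k. continuous_on S (\<theta> l)) \<and>
        Z_R P S = (\<Union>l<k. {(x, \<theta> l x) | x. x \<in> S}) \<and>
        (\<forall>l<k. \<forall>l'<k. l \<noteq> l' \<longrightarrow> (\<forall>x\<in>S. \<theta> l x \<noteq> \<theta> l' x)) \<and>
        (\<forall>l<k. m l \<ge> 1 \<and> (\<forall>x\<in>S. root_mult (evalx P x) (\<theta> l x) (m l))))"

typedef rp1 = "{L :: (real \<times> real) set. \<exists>v. v \<noteq> 0 \<and> L = {c *\<^sub>R v | c. c \<noteq> 0}}"
proof
  show "{c *\<^sub>R (1::real,0::real) | c. c \<noteq> 0} \<in> {L. \<exists>v. v \<noteq> 0 \<and> L = {c *\<^sub>R v | c. c \<noteq> 0}}"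
    by (rule CollectI, rule exI[of _ "(1::real, 0::real)"]) (simp add: zero_prod_def)
qed

definition proj :: "real \<times> real \<Rightarrow> rp1" where
  "proj v = Abs_rp1 {c *\<^sub>R v | c. c \<noteq> 0}"

text \<open>Quotient topology: U is open iff its preimage in R^2 minus the origin is open.\<close>
instantiation rp1 :: topological_space
begin
definition open_rp1 :: "rp1 set \<Rightarrow> bool" where
  "open_rp1 U \<longleftrightarrow> open {v :: real \<times> real. v \<noteq> 0 \<and> proj v \<in> U}"
instance
proof
  show "open (UNIV :: rp1 set)"
    unfolding open_rp1_def proof -
    have "{v :: real \<times> real. v \<noteq> 0} = - {0}" by auto
    then show "open {v :: real \<times> real. v \<noteq> 0 \<and> proj v \<in> UNIV}" by (simp add: open_Compl)
  qed
next
  fix S T :: "rp1 set"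
  assume "open S" "open T"
  then have "open ({v :: real \<times> real. v \<noteq> 0 \<and> proj v \<in> S} \<inter> {v. v \<noteq> 0 \<and> proj v \<in> T})"
    unfolding open_rp1_def by (rule open_Int)
  moreover have "{v :: real \<times> real. v \<noteq> 0 \<and> proj v \<in> S} \<inter> {v. v \<noteq> 0 \<and> proj v \<in> T}
      = {v. v \<noteq> 0 \<and> proj v \<in> S \<inter> T}" by auto
  ultimately show "open (S \<inter> T)" unfolding open_rp1_def by simp
next
  fix K :: "rp1 set set"
  assume "\<forall>S\<in>K. open S"
  then have "open (\<Union>S\<in>K. {v :: real \<times> real. v \<noteq> 0 \<and> proj v \<in> S})"
    unfolding open_rp1_def by auto
  moreover have "(\<Union>S\<in>K. {v :: real \<times> real. v \<noteq> 0 \<and> proj v \<in> S}) = {v. v \<noteq> 0 \<and> proj v \<in> \<Union>K}"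
    by auto
  ultimately show "open (\<Union>K)" unfolding open_rp1_def by simp
qed
end

text \<open>Binary forms in (u,v) are represented as elements of real poly poly:
  outer variable u, inner variable v (R[v][u] = R[u,v]).\<close>
definition eval2 :: "real poly poly \<Rightarrow> real \<Rightarrow> real \<Rightarrow> real" where
  "eval2 g u v = poly (poly g [:u:]) v"

text \<open>The linear form v0*u - u0*v.\<close>
definition linform :: "real \<Rightarrow> real \<Rightarrow> real poly poly" where
  "linform u0 v0 = [: smult (- u0) [:0, 1:], [:v0:] :]"

definition proj_root_mult :: "real poly poly \<Rightarrow> rp1 \<Rightarrow> nat \<Rightarrow> bool" where
  "proj_root_mult g p m \<longleftrightarrow>
     (\<exists>u0 v0. (u0, v0) \<noteq> 0 \<and> p = proj (u0, v0) \<and> g \<noteq> 0 \<and> eval2 g u0 v0 = 0 \<and>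
        m = (GREATEST j. linform u0 v0 ^ j dvd g))"

definition homx :: "(real ^ 'n \<Rightarrow> real) poly \<Rightarrow> real ^ 'n \<Rightarrow> real poly poly" where
  "homx P x = (\<Sum>k\<le>degree P. monom (monom (coeff P k x) (degree P - k)) k)"

definition Hom :: "(real ^ 'n \<Rightarrow> real) poly \<Rightarrow> real ^ 'n \<Rightarrow> real \<Rightarrow> real \<Rightarrow> real" where
  "Hom P x xn y = (\<Sum>k\<le>degree P. coeff P k x * xn ^ k * y ^ (degree P - k))"

definition Z_RP1 :: "(real ^ 'n \<Rightarrow> real) poly \<Rightarrow> (real ^ 'n) set \<Rightarrow> ((real ^ 'n) \<times> rp1) set" where
  "Z_RP1 P S = {(x, p). x \<in> S \<and> (\<exists>xn y. (xn, y) \<noteq> 0 \<and> p = proj (xn, y) \<and> Hom P x xn y = 0)}"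

definition proj_delineable :: "(real ^ 'n \<Rightarrow> real) poly \<Rightarrow> (real ^ 'n) set \<Rightarrow> bool" where
  "proj_delineable P S \<longleftrightarrow>
     (\<exists>(k::nat) (\<theta>::nat \<Rightarrow> real ^ 'n \<Rightarrow> rp1) (m::nat \<Rightarrow> nat).
        (\<forall>l<k. continuous_on S (\<theta> l)) \<and>
        Z_RP1 P S = (\<Union>l<k. {(x, \<theta> l x) | x. x \<in> S}) \<and>
        (\<forall>l<k. \<forall>l'<k. l \<noteq> l' \<longrightarrow> (\<forall>x\<in>S. \<theta> l x \<noteq> \<theta> l' x)) \<and>
        (\<forall>l<k. m l \<ge> 1 \<and> (\<forall>x\<in>S. proj_root_mult (homx P x) (\<theta> l x) (m l))))"

end

theory Submission imports Defs begin

lemma rp1_mem: "{c *\<^sub>R v | c. c \<noteq> 0} \<in> {L :: (real \<times> real) set. \<exists>v. v \<noteq> 0 \<and> L = {c *\<^sub>R v | c. c \<noteq> 0}}"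
  if "v \<noteq> 0" for v :: "real \<times> real" using that by blast

lemma proj_eq:
  assumes "a \<noteq> 0" "b \<noteq> 0"
  shows "proj a = proj b \<longleftrightarrow> (\<exists>c. c \<noteq> 0 \<and> a = c *\<^sub>R b)"
proof
  assume "proj a = proj b"
  then have "{c *\<^sub>R a | c. c \<noteq> 0} = {c *\<^sub>R b | c. c \<noteq> 0}"
    unfolding proj_def using Abs_rp1_inject[OF rp1_mem[OF assms(1)] rp1_mem[OF assms(2)]] by simp
  moreover have "a \<in> {c *\<^sub>R a | c. c \<noteq> 0}" by (rule CollectI, rule exI[of _ 1]) simp
  ultimately show "\<exists>c. c \<noteq> 0 \<and> a = c *\<^sub>R b" by auto
next
  assume "\<exists>c. c \<noteq> 0 \<and> a = c *\<^sub>R b"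
  then obtain c where c: "c \<noteq> 0" "a = c *\<^sub>R b" by blast
  have "{e *\<^sub>R a | e. e \<noteq> 0} = {e *\<^sub>R b | e. e \<noteq> 0}"
  proof (intro set_eqI iffI)
    fix w assume "w \<in> {e *\<^sub>R a | e. e \<noteq> 0}"
    then obtain e where e: "e \<noteq> 0" "w = e *\<^sub>R a" by blast
    then have "w = (e * c) *\<^sub>R b" "e * c \<noteq> 0" using c by auto
    then show "w \<in> {e *\<^sub>R b | e. e \<noteq> 0}" by blast
  next
    fix w assume "w \<in> {e *\<^sub>R b | e. e \<noteq> 0}"
    then obtain e where e: "e \<noteq> 0" "w = e *\<^sub>R b" by blast
    then have "w = (e / c) *\<^sub>R a" "e / c \<noteq> 0" using c by auto
    then show "w \<in> {e *\<^sub>R a | e. e \<noteq> 0}" by blast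
  qed
  then show "proj a = proj b" unfolding proj_def by simp
qed

lemma rp1_surj: "\<exists>v. v \<noteq> 0 \<and> p = proj v"
proof -
  obtain v where "v \<noteq> 0" "Rep_rp1 p = {c *\<^sub>R v | c. c \<noteq> 0}" using Rep_rp1[of p] by blast
  moreover have "p = Abs_rp1 (Rep_rp1 p)" by (simp add: Rep_rp1_inverse)
  ultimately have "v \<noteq> 0 \<and> p = proj v" unfolding proj_def by simp
  then show ?thesis by blast
qed

definition fin :: "real \<Rightarrow> rp1" where "fin t = proj (t, 1)"
definition pinf :: "rp1" where "pinf = proj (1, 0)"
definition deh :: "rp1 \<Rightarrow> real" where "deh p = (THE t. p = fin t)"

lemma proj_fin: "v \<noteq> 0 \<Longrightarrow> proj (u, v) = fin (u / v)"
proof -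
  assume v: "v \<noteq> 0"
  then have "(u, v) = v *\<^sub>R (u / v, 1)" by simp
  then have "\<exists>c. c \<noteq> 0 \<and> (u, v) = c *\<^sub>R (u / v, 1::real)" using v by blast
  moreover have "(u, v) \<noteq> 0" "(u / v, 1::real) \<noteq> 0" using v by (auto simp: zero_prod_def)
  ultimately show ?thesis unfolding fin_def using proj_eq by blast
qed

lemma proj_inf: "u \<noteq> 0 \<Longrightarrow> proj (u, 0) = pinf"
proof -
  assume u: "u \<noteq> 0"
  then have "(u, 0) = u *\<^sub>R (1::real, 0::real)" by simp
  then have "\<exists>c. c \<noteq> 0 \<and> (u, 0) = c *\<^sub>R (1::real, 0::real)" using u by blast
  moreover have "(u, 0) \<noteq> 0" "(1::real, 0::real) \<noteq> 0" using u by (auto simp: zero_prod_def)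
  ultimately show ?thesis unfolding pinf_def using proj_eq by blast
qed

lemma fin_inj: "fin s = fin t \<longleftrightarrow> s = t"
  unfolding fin_def by (subst proj_eq) (auto simp: zero_prod_def)

lemma fin_ne_inf: "fin t \<noteq> pinf"
  unfolding fin_def pinf_def by (subst proj_eq) (auto simp: zero_prod_def)

lemma deh_fin[simp]: "deh (fin t) = t"
  unfolding deh_def using fin_inj by auto

lemma rp1_cases: "p = pinf \<or> (\<exists>t. p = fin t)"
proof -
  obtain u v where "(u, v) \<noteq> 0" "p = proj (u, v)" using rp1_surj[of p] by auto
  then show ?thesis using proj_fin proj_inf by (cases "v = 0") (auto simp: zero_prod_def)
qed

lemma fin_deh: "p \<noteq> pinf \<Longrightarrow> fin (deh p) = p"
  using rp1_cases[of p] by auto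

lemma proj_ne_inf_iff: "w \<noteq> 0 \<Longrightarrow> proj w \<noteq> pinf \<longleftrightarrow> snd w \<noteq> 0"
proof (cases w)
  case (Pair a b)
  assume w: "w \<noteq> 0"
  show ?thesis
  proof (cases "b = 0")
    case True
    then have "a \<noteq> 0" using w Pair by (auto simp: zero_prod_def)
    then show ?thesis using True Pair proj_inf by simp
  next
    case False
    then show ?thesis using Pair proj_fin fin_ne_inf by simp
  qed
qed

lemma continuous_proj: "continuous_on (- {0}) proj"
  unfolding continuous_on_open_invariant
proof (intro allI impI)
  fix B :: "rp1 set" assume "open B"
  then have "open {v :: real \<times> real. v \<noteq> 0 \<and> proj v \<in> B}" unfolding open_rp1_def .
  then show "\<exists>A. open A \<and> A \<inter> - {0} = proj -` B \<inter> - {0}"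
    by (intro exI[of _ "{v :: real \<times> real. v \<noteq> 0 \<and> proj v \<in> B}"]) auto
qed

lemma continuous_fin: "continuous_on A fin"
proof -
  have "continuous_on A (\<lambda>t. proj (t, 1::real))"
    by (rule continuous_on_compose2[OF continuous_proj]) (auto intro!: continuous_intros simp: zero_prod_def)
  then show ?thesis by (simp add: fin_def[abs_def])
qed

lemma open_ne_inf: "open (- {pinf})"
proof -
  have "{v :: real \<times> real. v \<noteq> 0 \<and> proj v \<in> - {pinf}} = {v. snd v \<noteq> 0}"
    using proj_ne_inf_iff by (auto simp: zero_prod_def)
  moreover have "open {v :: real \<times> real. snd v \<noteq> 0}"
    by (rule open_Collect_neq) (auto intro: continuous_intros)
  ultimately show ?thesis unfolding open_rp1_def by simp
qed

lemma closed_inf: "closed {pinf}"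
  using open_ne_inf by (simp add: closed_def)

lemma deh_proj: "snd w \<noteq> 0 \<Longrightarrow> deh (proj w) = fst w / snd w"
  by (cases w) (simp add: proj_fin)

lemma continuous_deh: "continuous_on (- {pinf}) deh"
  unfolding continuous_on_open_invariant
proof (intro allI impI)
  fix B :: "real set" assume B: "open B"
  have "{w :: real \<times> real. w \<noteq> 0 \<and> proj w \<in> - {pinf} \<inter> deh -` B} = (\<lambda>w. fst w / snd w) -` B \<inter> {w. snd w \<noteq> 0}"
    using proj_ne_inf_iff deh_proj by (auto simp: zero_prod_def)
  moreover have "open ((\<lambda>w. fst w / snd w) -` B \<inter> {w :: real \<times> real. snd w \<noteq> 0})"
  proof -
    have o: "open {w :: real \<times> real. snd w \<noteq> 0}"
      by (rule open_Collect_neq) (auto intro: continuous_intros)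
    have "continuous_on {w :: real \<times> real. snd w \<noteq> 0} (\<lambda>w. fst w / snd w)"
      by (intro continuous_intros) auto
    then show ?thesis using continuous_on_open_vimage[OF o] B by blast
  qed
  ultimately have "open (- {pinf} \<inter> deh -` B)" unfolding open_rp1_def by simp
  then show "\<exists>A. open A \<and> A \<inter> - {pinf} = deh -` B \<inter> - {pinf}" by blast
qed


definition hz :: "nat \<Rightarrow> real poly \<Rightarrow> real poly poly" where
  "hz a p = (\<Sum>i\<le>a. monom (monom (coeff p i) (a - i)) i)"

lemma coeff_hz: "coeff (hz a p) i = (if i \<le> a then monom (coeff p i) (a - i) else 0)"
  unfolding hz_def coeff_sum coeff_monom by (simp only: sum.delta finite_atMost atMost_iff)

lemma coeff_hz': "degree p \<le> a \<Longrightarrow> coeff (hz a p) i = monom (coeff p i) (a - i)"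
  by (simp add: coeff_hz coeff_eq_0)

lemma hz_mult:
  assumes "degree p \<le> a" "degree q \<le> b"
  shows "hz (a + b) (p * q) = hz a p * hz b q"
proof (rule poly_eqI)
  fix i
  have dpq: "degree (p * q) \<le> a + b"
    using degree_mult_le[of p q] assms by linarith
  have "coeff (hz a p * hz b q) i = (\<Sum>r\<le>i. coeff (hz a p) r * coeff (hz b q) (i - r))"
    by (rule coeff_mult)
  also have "\<dots> = (\<Sum>r\<le>i. monom (coeff p r * coeff q (i - r)) (a + b - i))"
  proof (rule sum.cong[OF refl])
    fix r assume r: "r \<in> {..i}"
    show "coeff (hz a p) r * coeff (hz b q) (i - r) = monom (coeff p r * coeff q (i - r)) (a + b - i)"
    proof (cases "r \<le> a \<and> i - r \<le> b")
      case True
      then have "a - r + (b - (i - r)) = a + b - i" using r by auto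
      then show ?thesis using assms by (simp add: coeff_hz' mult_monom)
    next
      case False
      then have "coeff p r = 0 \<or> coeff q (i - r) = 0" using assms
        by (auto intro: coeff_eq_0)
      then show ?thesis using assms by (auto simp: coeff_hz')
    qed
  qed
  also have "\<dots> = monom (coeff (p * q) i) (a + b - i)"
    by (simp add: coeff_mult monom_sum)
  also have "\<dots> = coeff (hz (a + b) (p * q)) i"
    using dpq by (simp add: coeff_hz')
  finally show "coeff (hz (a + b) (p * q)) i = coeff (hz a p * hz b q) i" by simp
qed

definition dh :: "real poly poly \<Rightarrow> real poly" where
  "dh g = map_poly (\<lambda>q. poly q 1) g"

lemma coeff_dh: "coeff (dh g) i = poly (coeff g i) 1"
  unfolding dh_def by (simp add: coeff_map_poly)

lemma dh_mult: "dh (g * h) = dh g * dh h"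
  by (rule poly_eqI) (simp add: coeff_dh coeff_mult poly_sum)

lemma dh_power: "dh (g ^ j) = dh g ^ j"
proof (induction j)
  case 0
  show ?case by (rule poly_eqI) (simp add: coeff_dh coeff_1)
next
  case (Suc j)
  then show ?case by (simp add: dh_mult)
qed

lemma dh_hz: "degree p \<le> a \<Longrightarrow> dh (hz a p) = p"
  by (rule poly_eqI) (simp add: coeff_dh coeff_hz' poly_monom)

lemma dh_zero: "dh 0 = 0"
  by (simp add: dh_def)

lemma hz_one: "hz a 1 = [:monom 1 a:]"
  by (rule poly_eqI) (simp add: coeff_hz coeff_1 coeff_pCons split: nat.splits)

lemma hz_power: "hz j ([:- t, 1:] ^ j) = hz 1 [:- t, 1:] ^ j"
proof (induction j)
  case 0
  show ?case using hz_one[of 0] by (simp add: one_pCons)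
next
  case (Suc j)
  have "hz (1 + j) ([:- t, 1:] * [:- t, 1:] ^ j) = hz 1 [:- t, 1:] * hz j ([:- t, 1:] ^ j)"
    by (rule hz_mult) (auto simp: degree_power_eq)
  then show ?case using Suc by simp
qed


lemma hz_power_gen: "degree p \<le> 1 \<Longrightarrow> hz j (p ^ j) = hz 1 p ^ j"
proof (induction j)
  case 0
  show ?case using hz_one[of 0] by (simp add: one_pCons)
next
  case (Suc j)
  have "degree p * j \<le> 1 * j" using mult_le_mono1[OF Suc.prems, of j] .
  then have "degree (p ^ j) \<le> j" using degree_power_le[of p j] by linarith
  then have "hz (1 + j) (p * p ^ j) = hz 1 p * hz j (p ^ j)"
    using Suc.prems by (intro hz_mult) auto
  then show ?case using Suc by simp
qed

lemma hz1: "hz 1 p = [: monom (coeff p 0) 1, monom (coeff p 1) 0 :]"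
proof (rule poly_eqI)
  fix i show "coeff (hz 1 p) i = coeff [: monom (coeff p 0) 1, monom (coeff p 1) 0 :] i"
    by (cases i; cases "i - 1") (auto simp: coeff_hz coeff_pCons)
qed

definition homE :: "nat \<Rightarrow> real poly \<Rightarrow> real \<Rightarrow> real \<Rightarrow> real" where
  "homE d E u v = (\<Sum>i\<le>d. coeff E i * u ^ i * v ^ (d - i))"

lemma eval2_hz: "eval2 (hz d E) u v = homE d E u v"
  unfolding eval2_def hz_def homE_def
  by (simp add: poly_sum poly_monom poly_mult poly_power mult_ac)

lemma poly_sum_le: "degree (E :: real poly) \<le> d \<Longrightarrow> poly E s = (\<Sum>i\<le>d. coeff E i * s ^ i)"
proof -
  assume dE: "degree E \<le> d"
  have "poly E s = (\<Sum>i\<le>degree E. coeff E i * s ^ i)" by (rule poly_altdef)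
  also have "\<dots> = (\<Sum>i\<le>d. coeff E i * s ^ i)"
    by (rule sum.mono_neutral_left) (use dE in \<open>auto simp: coeff_eq_0\<close>)
  finally show ?thesis .
qed

lemma homE_fin: "v \<noteq> 0 \<Longrightarrow> degree E \<le> d \<Longrightarrow> homE d E u v = v ^ d * poly E (u / v)"
proof -
  assume v: "v \<noteq> 0" and dE: "degree E \<le> d"
  have "homE d E u v = (\<Sum>i\<le>d. v ^ d * (coeff E i * (u / v) ^ i))"
    unfolding homE_def
  proof (rule sum.cong[OF refl])
    fix i assume "i \<in> {..d}"
    then have "v ^ d = v ^ i * v ^ (d - i)" by (simp flip: power_add)
    then show "coeff E i * u ^ i * v ^ (d - i) = v ^ d * (coeff E i * (u / v) ^ i)"
      using v by (simp add: power_divide field_simps)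
  qed
  also have "\<dots> = v ^ d * poly E (u / v)"
    by (simp add: poly_sum_le[OF dE] sum_distrib_left)
  finally show ?thesis .
qed

lemma homE_zero: "homE d E u 0 = coeff E d * u ^ d"
proof -
  have e: "{..d} = insert d {..<d}" by auto
  have "homE d E u 0 = (\<Sum>i\<in>insert d {..<d}. coeff E i * u ^ i * 0 ^ (d - i))"
    unfolding homE_def e ..
  also have "\<dots> = coeff E d * u ^ d"
    by (subst sum.insert) (auto intro!: sum.neutral)
  finally show ?thesis .
qed


lemma dvd_L:
  fixes E :: "real poly"
  assumes E: "E \<noteq> 0" and kd: "k \<le> d" and dE: "degree E = d - k"
  shows "hz 1 [:- t, 1:] ^ j dvd hz d E \<longleftrightarrow> j \<le> order t E"
proof
  assume "hz 1 [:- t, 1:] ^ j dvd hz d E"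
  then obtain Q where "hz d E = hz 1 [:- t, 1:] ^ j * Q" by (elim dvdE)
  then have "dh (hz d E) = dh (hz 1 [:- t, 1:]) ^ j * dh Q" by (simp add: dh_mult dh_power)
  then have "E = [:- t, 1:] ^ j * dh Q" using dE by (simp add: dh_hz)
  then have "[:- t, 1:] ^ j dvd E" by simp
  then show "j \<le> order t E" using E by (simp add: order_divides)
next
  assume "j \<le> order t E"
  then have "[:- t, 1:] ^ j dvd E" by (simp add: order_divides)
  then obtain Q where Q: "E = [:- t, 1:] ^ j * Q" by (elim dvdE)
  then have "Q \<noteq> 0" using E by auto
  then have degE: "degree E = j + degree Q" using Q by (simp add: degree_mult_eq degree_linear_power)
  have dd: "d = k + (j + degree Q)" using degE dE kd by simp
  have s2: "hz (j + degree Q) ([:- t, 1:] ^ j * Q) = hz j ([:- t, 1:] ^ j) * hz (degree Q) Q"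
    by (rule hz_mult) (auto simp: degree_linear_power)
  have "hz d E = hz (k + (j + degree Q)) (1 * ([:- t, 1:] ^ j * Q))" using Q dd by simp
  also have "\<dots> = hz k 1 * hz (j + degree Q) ([:- t, 1:] ^ j * Q)"
  proof (rule hz_mult)
    show "degree ([:- t, 1:] ^ j * Q) \<le> j + degree Q"
      using degree_mult_le[of "[:- t, 1:] ^ j" Q] by (simp add: degree_linear_power)
  qed simp
  also have "\<dots> = hz k 1 * (hz 1 [:- t, 1:] ^ j * hz (degree Q) Q)"
    using s2 hz_power_gen[of "[:- t, 1:]" j] by simp
  finally show "hz 1 [:- t, 1:] ^ j dvd hz d E" by (simp add: mult.left_commute)
qed

lemma dvd_V:
  fixes E :: "real poly"
  assumes E: "E \<noteq> 0" and kd: "k \<le> d" and dE: "degree E = d - k"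
  shows "hz 1 1 ^ j dvd hz d E \<longleftrightarrow> j \<le> k"
proof -
  have V: "hz 1 1 = [:monom 1 1:]" by (rule hz_one)
  have HV: "hz d E = hz 1 1 ^ k * hz (d - k) E"
  proof -
    have "hz d E = hz (k + (d - k)) (1 * E)" using kd by simp
    also have "\<dots> = hz k 1 * hz (d - k) E" by (rule hz_mult) (use dE in auto)
    also have "hz k 1 = hz 1 1 ^ k" using hz_power_gen[of 1 k] by simp
    finally show ?thesis .
  qed
  show ?thesis
  proof
    assume dv: "hz 1 1 ^ j dvd hz d E"
    show "j \<le> k"
    proof (rule ccontr)
      assume "\<not> j \<le> k"
      then have "hz 1 1 ^ (Suc k) dvd hz 1 1 ^ j" by (intro le_imp_power_dvd) simp
      with dv have "hz 1 1 ^ k * hz 1 1 dvd hz 1 1 ^ k * hz (d - k) E"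
        using HV by (metis dvd_trans power_Suc2)
      moreover have "hz 1 1 ^ k \<noteq> 0" using V by simp
      ultimately have "hz 1 1 dvd hz (d - k) E" using dvd_times_left_cancel_iff by blast
      then obtain Q where Q: "hz (d - k) E = [:monom 1 1:] * Q" using V by (elim dvdE) simp
      have "coeff (hz (d - k) E) (d - k) = [:lead_coeff E:]"
        using dE by (simp add: coeff_hz monom_0)
      moreover have "coeff ([:monom 1 1:] * Q) (d - k) = monom 1 1 * coeff Q (d - k)" by simp
      ultimately have "[:lead_coeff E:] = monom 1 1 * coeff Q (d - k)" using Q by simp
      then have "poly [:lead_coeff E:] 0 = poly (monom 1 1 * coeff Q (d - k)) 0" by simp
      then have "lead_coeff E = 0" by (simp add: poly_monom)
      then show False using E by simp
    qed
  next
    assume "j \<le> k"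
    then have "hz 1 1 ^ j dvd hz 1 1 ^ k" by (rule le_imp_power_dvd)
    then show "hz 1 1 ^ j dvd hz d E" using HV by simp
  qed
qed

lemma linform_fin: "linform (c * t) c = [:[:c:]:] * hz 1 [:- t, 1:]"
  unfolding linform_def hz1 by (simp add: monom_Suc monom_0)

lemma linform_inf: "linform c 0 = [:[:- c:]:] * hz 1 1"
  unfolding linform_def hz1 by (simp add: monom_Suc monom_0)

lemma unit_dvd_pow:
  fixes L H :: "real poly poly"
  assumes "c \<noteq> 0"
  shows "([:[:c:]:] * L) ^ j dvd H \<longleftrightarrow> L ^ j dvd H"
proof -
  have "1 = [:[:c:]:] * [:[:1 / c:]:]" using assms by (simp add: one_pCons)
  then have "is_unit [:[:c:]:]" by (rule dvdI)
  then have "is_unit ([:[:c:]:] ^ j)" by (simp add: is_unit_power_iff)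
  moreover have eq: "([:[:c:]:] * L) ^ j = [:[:c:]:] ^ j * L ^ j" by (rule power_mult_distrib)
  ultimately show ?thesis using mult_unit_dvd_iff' by metis
qed


lemma greatest_le: "(GREATEST j::nat. j \<le> n) = n"
  by (rule Greatest_equality) auto

lemma coeff_d_zero_iff:
  fixes E :: "real poly"
  assumes E: "E \<noteq> 0" and kd: "k \<le> d" and dE: "degree E = d - k"
  shows "coeff E d = 0 \<longleftrightarrow> 0 < k"
proof
  assume "coeff E d = 0"
  then show "0 < k" using E dE by (cases k) auto
next
  assume "0 < k"
  then show "coeff E d = 0" using dE kd by (intro coeff_eq_0) simp
qed

lemma hz_nonzero:
  fixes E :: "real poly"
  assumes E: "E \<noteq> 0" and dE: "degree E \<le> d"
  shows "hz d E \<noteq> 0"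
  using dh_hz[OF dE] E dh_zero by auto

lemma prm_fin:
  fixes E :: "real poly"
  assumes E: "E \<noteq> 0" and kd: "k \<le> d" and dE: "degree E = d - k"
  shows "proj_root_mult (hz d E) (fin t) m \<longleftrightarrow> root_mult E t m"
proof
  assume "proj_root_mult (hz d E) (fin t) m"
  then obtain u0 v0 where nz: "(u0, v0) \<noteq> 0" and eq: "fin t = proj (u0, v0)"
    and ev: "eval2 (hz d E) u0 v0 = 0" and m: "m = (GREATEST j. linform u0 v0 ^ j dvd hz d E)"
    unfolding proj_root_mult_def by blast
  have v0: "v0 \<noteq> 0"
  proof
    assume "v0 = 0"
    then have "u0 \<noteq> 0" using nz by (simp add: zero_prod_def)
    then show False using eq \<open>v0 = 0\<close> proj_inf fin_ne_inf by simp
  qed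
  then have "t = u0 / v0" using eq proj_fin fin_inj by simp
  then have u0: "u0 = v0 * t" using v0 by simp
  have "homE d E u0 v0 = 0" using ev eval2_hz by simp
  then have "poly E t = 0" using homE_fin[OF v0, of E d u0] dE v0 \<open>t = u0 / v0\<close> by simp
  moreover have "(\<lambda>j. linform u0 v0 ^ j dvd hz d E) = (\<lambda>j. j \<le> order t E)"
    unfolding u0 linform_fin using unit_dvd_pow[OF v0] dvd_L[OF E kd dE] by simp
  ultimately show "root_mult E t m" using E m greatest_le unfolding root_mult_def by simp
next
  assume "root_mult E t m"
  then have E0: "poly E t = 0" and m: "m = order t E" unfolding root_mult_def by auto
  have "(\<lambda>j. linform t 1 ^ j dvd hz d E) = (\<lambda>j. j \<le> order t E)"
    using linform_fin[of 1 t] unit_dvd_pow[of 1] dvd_L[OF E kd dE] by simp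
  then have "m = (GREATEST j. linform t 1 ^ j dvd hz d E)" using m greatest_le by simp
  moreover have "eval2 (hz d E) t 1 = 0" using eval2_hz homE_fin[of 1 E d t] dE E0 by simp
  moreover have "fin t = proj (t, 1)" by (simp add: fin_def)
  moreover have "(t, 1::real) \<noteq> 0" by (simp add: zero_prod_def)
  ultimately show "proj_root_mult (hz d E) (fin t) m"
    unfolding proj_root_mult_def using hz_nonzero[OF E] dE by fastforce
qed

lemma prm_inf:
  fixes E :: "real poly"
  assumes E: "E \<noteq> 0" and kd: "k \<le> d" and dE: "degree E = d - k"
  shows "proj_root_mult (hz d E) pinf m \<longleftrightarrow> 0 < k \<and> m = k"
proof
  assume "proj_root_mult (hz d E) pinf m"
  then obtain u0 v0 where nz: "(u0, v0) \<noteq> 0" and eq: "pinf = proj (u0, v0)"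
    and ev: "eval2 (hz d E) u0 v0 = 0" and m: "m = (GREATEST j. linform u0 v0 ^ j dvd hz d E)"
    unfolding proj_root_mult_def by blast
  have v0: "v0 = 0"
  proof (rule ccontr)
    assume "v0 \<noteq> 0"
    then show False using eq proj_fin fin_ne_inf by metis
  qed
  then have u0: "u0 \<noteq> 0" using nz by (simp add: zero_prod_def)
  have "homE d E u0 0 = 0" using ev eval2_hz v0 by simp
  then have "coeff E d = 0" using homE_zero u0 by simp
  then have k: "0 < k" using coeff_d_zero_iff[OF E kd dE] by simp
  have "(\<lambda>j. linform u0 v0 ^ j dvd hz d E) = (\<lambda>j. j \<le> k)"
    unfolding v0 linform_inf using unit_dvd_pow[of "- u0"] u0 dvd_V[OF E kd dE] by simp
  then show "0 < k \<and> m = k" using k m greatest_le by simp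
next
  assume k: "0 < k \<and> m = k"
  have "(\<lambda>j. linform 1 0 ^ j dvd hz d E) = (\<lambda>j. j \<le> k)"
    unfolding linform_inf using unit_dvd_pow[of "- 1"] dvd_V[OF E kd dE] by simp
  then have "m = (GREATEST j. linform 1 0 ^ j dvd hz d E)" using k greatest_le by simp
  moreover have "eval2 (hz d E) 1 0 = 0"
    using eval2_hz homE_zero coeff_d_zero_iff[OF E kd dE] k by simp
  moreover have "(1::real, 0::real) \<noteq> 0" by (simp add: zero_prod_def)
  ultimately show "proj_root_mult (hz d E) pinf m"
    unfolding proj_root_mult_def pinf_def using hz_nonzero[OF E] dE by fastforce
qed

lemma zfib:
  fixes E :: "real poly"
  assumes E: "E \<noteq> 0" and kd: "k \<le> d" and dE: "degree E = d - k"
  shows "(\<exists>u v. (u, v) \<noteq> 0 \<and> p = proj (u, v) \<and> homE d E u v = 0) \<longleftrightarrow>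
         (\<exists>t. p = fin t \<and> poly E t = 0) \<or> (p = pinf \<and> 0 < k)"
proof
  assume "\<exists>u v. (u, v) \<noteq> 0 \<and> p = proj (u, v) \<and> homE d E u v = 0"
  then obtain u v where nz: "(u, v) \<noteq> 0" and p: "p = proj (u, v)" and h: "homE d E u v = 0" by blast
  show "(\<exists>t. p = fin t \<and> poly E t = 0) \<or> (p = pinf \<and> 0 < k)"
  proof (cases "v = 0")
    case True
    then have u: "u \<noteq> 0" using nz by (simp add: zero_prod_def)
    then have "coeff E d = 0" using h True homE_zero by simp
    then show ?thesis using coeff_d_zero_iff[OF E kd dE] p True proj_inf u by simp
  next
    case False
    then have "poly E (u / v) = 0" using h homE_fin[OF False, of E d u] dE by simp
    then show ?thesis using p proj_fin[OF False] by blast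
  qed
next
  assume "(\<exists>t. p = fin t \<and> poly E t = 0) \<or> (p = pinf \<and> 0 < k)"
  then show "\<exists>u v. (u, v) \<noteq> 0 \<and> p = proj (u, v) \<and> homE d E u v = 0"
  proof
    assume "\<exists>t. p = fin t \<and> poly E t = 0"
    then obtain t where "p = fin t" "poly E t = 0" by blast
    then have "(t, 1::real) \<noteq> 0 \<and> p = proj (t, 1) \<and> homE d E t 1 = 0"
      using homE_fin[of 1 E d t] dE by (simp add: fin_def zero_prod_def)
    then show ?thesis by blast
  next
    assume "p = pinf \<and> 0 < k"
    then have "(1::real, 0::real) \<noteq> 0 \<and> p = proj (1, 0) \<and> homE d E 1 0 = 0"
      using homE_zero coeff_d_zero_iff[OF E kd dE] by (simp add: pinf_def zero_prod_def)
    then show ?thesis by blast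
  qed
qed


lemma coeff_evalx: "coeff (evalx P x) i = coeff P i x"
  unfolding evalx_def by (simp add: coeff_map_poly)

lemma homx_hz: "homx P x = hz (degree P) (evalx P x)"
  unfolding homx_def hz_def by (simp add: coeff_evalx)

lemma Hom_homE: "Hom P x u v = homE (degree P) (evalx P x) u v"
  unfolding Hom_def homE_def by (simp add: coeff_evalx)

lemma good_evalx:
  assumes kd: "k \<le> degree P" and nz: "coeff P (degree P - k) x \<noteq> 0"
    and z: "\<forall>j<k. coeff P (degree P - j) x = 0"
  shows "evalx P x \<noteq> 0" "degree (evalx P x) = degree P - k"
proof -
  have c: "coeff (evalx P x) (degree P - k) \<noteq> 0" using nz by (simp add: coeff_evalx)
  then show "evalx P x \<noteq> 0" by auto
  have "degree (evalx P x) \<le> degree P - k"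
  proof (rule degree_le, intro allI impI)
    fix i assume i: "degree P - k < i"
    show "coeff (evalx P x) i = 0"
    proof (cases "i \<le> degree P")
      case True
      then have "degree P - (degree P - i) = i" by simp
      moreover have "degree P - i < k" using i True kd by linarith
      ultimately show ?thesis using z by (metis coeff_evalx)
    next
      case False
      then show ?thesis by (simp add: coeff_evalx coeff_eq_0)
    qed
  qed
  moreover have "degree P - k \<le> degree (evalx P x)" using c by (rule le_degree)
  ultimately show "degree (evalx P x) = degree P - k" by simp
qed


lemma ZR_iff: "(x, t) \<in> Z_R P S \<longleftrightarrow> x \<in> S \<and> poly (evalx P x) t = 0"
  unfolding Z_R_def by simp

lemma fwd:
  fixes P :: "(real ^ 'n \<Rightarrow> real) poly" and S :: "(real ^ 'n) set"
  assumes PF: "\<And>x t m. x \<in> S \<Longrightarrow> proj_root_mult (homx P x) (fin t) m \<longleftrightarrow> root_mult (evalx P x) t m"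
    and PI: "\<And>x m. x \<in> S \<Longrightarrow> proj_root_mult (homx P x) pinf m \<longleftrightarrow> 0 < k \<and> m = k"
    and ZP: "\<And>x p. (x, p) \<in> Z_RP1 P S \<longleftrightarrow> x \<in> S \<and> ((\<exists>t. p = fin t \<and> poly (evalx P x) t = 0) \<or> (p = pinf \<and> 0 < k))"
    and del: "delineable P S"
  shows "proj_delineable P S"
proof -
  obtain K :: nat and \<theta> :: "nat \<Rightarrow> real ^ 'n \<Rightarrow> real" and m :: "nat \<Rightarrow> nat"
    where cont: "\<forall>l<K. continuous_on S (\<theta> l)"
    and Z: "Z_R P S = (\<Union>l<K. {(x, \<theta> l x) | x. x \<in> S})"
    and dis: "\<forall>l<K. \<forall>l'<K. l \<noteq> l' \<longrightarrow> (\<forall>x\<in>S. \<theta> l x \<noteq> \<theta> l' x)"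
    and mu: "\<forall>l<K. m l \<ge> 1 \<and> (\<forall>x\<in>S. root_mult (evalx P x) (\<theta> l x) (m l))"
    using del unfolding delineable_def by (elim exE conjE) (rule that; assumption)
  define K' where "K' = K + (if 0 < k then 1 else 0)"
  define \<theta>' where "\<theta>' l x = (if l < K then fin (\<theta> l x) else pinf)" for l x
  define m' where "m' l = (if l < K then m l else k)" for l
  have "\<forall>l<K'. continuous_on S (\<theta>' l)"
  proof (intro allI impI)
    fix l assume "l < K'"
    show "continuous_on S (\<theta>' l)"
    proof (cases "l < K")
      case True
      then have "continuous_on S (\<lambda>x. fin (\<theta> l x))"
        using cont by (intro continuous_on_compose2[OF continuous_fin[of UNIV]]) auto
      then show ?thesis using True unfolding \<theta>'_def by simp
    next
      case False
      then show ?thesis unfolding \<theta>'_def by simp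
    qed
  qed
  moreover have "Z_RP1 P S = (\<Union>l<K'. {(x, \<theta>' l x) | x. x \<in> S})"
  proof (intro set_eqI iffI)
    fix z assume "z \<in> Z_RP1 P S"
    then obtain x p where z: "z = (x, p)" and zz: "(x, p) \<in> Z_RP1 P S" by (cases z) auto
    then have x: "x \<in> S" and alt: "(\<exists>t. p = fin t \<and> poly (evalx P x) t = 0) \<or> (p = pinf \<and> 0 < k)"
      using ZP by auto
    from alt show "z \<in> (\<Union>l<K'. {(x, \<theta>' l x) | x. x \<in> S})"
    proof
      assume "\<exists>t. p = fin t \<and> poly (evalx P x) t = 0"
      then obtain t where t: "p = fin t" "poly (evalx P x) t = 0" by blast
      then have "(x, t) \<in> Z_R P S" using x ZR_iff by blast
      then obtain l where l: "l < K" "t = \<theta> l x" using Z by auto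
      then have "l < K'" "p = \<theta>' l x" using t unfolding K'_def \<theta>'_def by auto
      then show ?thesis using z x by blast
    next
      assume "p = pinf \<and> 0 < k"
      then have "K < K'" "p = \<theta>' K x" unfolding K'_def \<theta>'_def by auto
      then show ?thesis using z x by blast
    qed
  next
    fix z assume "z \<in> (\<Union>l<K'. {(x, \<theta>' l x) | x. x \<in> S})"
    then obtain l x where l: "l < K'" and x: "x \<in> S" and z: "z = (x, \<theta>' l x)" by blast
    show "z \<in> Z_RP1 P S"
    proof (cases "l < K")
      case True
      then have "poly (evalx P x) (\<theta> l x) = 0" using mu x unfolding root_mult_def by blast
      then show ?thesis using z x True ZP unfolding \<theta>'_def by auto
    next
      case False
      then have "0 < k" using l unfolding K'_def by (auto split: if_splits)
      then show ?thesis using z x False ZP unfolding \<theta>'_def by auto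
    qed
  qed
  moreover have "\<forall>l<K'. \<forall>l'<K'. l \<noteq> l' \<longrightarrow> (\<forall>x\<in>S. \<theta>' l x \<noteq> \<theta>' l' x)"
  proof (intro allI impI ballI)
    fix l l' x assume l: "l < K'" and l': "l' < K'" and ne: "l \<noteq> l'" and x: "x \<in> S"
    have "K' \<le> Suc K" unfolding K'_def by simp
    then consider "l < K" "l' < K" | "l < K" "l' = K" | "l = K" "l' < K" | "l = K" "l' = K"
      using l l' by linarith
    then show "\<theta>' l x \<noteq> \<theta>' l' x"
    proof cases
      case 1
      then show ?thesis using dis ne x fin_inj unfolding \<theta>'_def by auto
    next
      case 2
      then show ?thesis using fin_ne_inf unfolding \<theta>'_def by auto
    next
      case 3
      then show ?thesis using fin_ne_inf unfolding \<theta>'_def by (auto simp: eq_commute)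
    next
      case 4
      then show ?thesis using ne by simp
    qed
  qed
  moreover have "\<forall>l<K'. m' l \<ge> 1 \<and> (\<forall>x\<in>S. proj_root_mult (homx P x) (\<theta>' l x) (m' l))"
  proof (intro allI impI conjI ballI)
    fix l assume l: "l < K'"
    show "m' l \<ge> 1"
      using mu l unfolding m'_def K'_def by (auto split: if_splits)
    fix x assume x: "x \<in> S"
    show "proj_root_mult (homx P x) (\<theta>' l x) (m' l)"
    proof (cases "l < K")
      case True
      then show ?thesis using PF[OF x] mu x unfolding m'_def \<theta>'_def by simp
    next
      case False
      then have "0 < k" using l unfolding K'_def by (auto split: if_splits)
      then show ?thesis using PI[OF x] False unfolding m'_def \<theta>'_def by simp
    qed
  qed
  ultimately show ?thesis unfolding proj_delineable_def by blast
qed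


lemma bwd:
  fixes P :: "(real ^ 'n \<Rightarrow> real) poly" and S :: "(real ^ 'n) set"
  assumes PF: "\<And>x t m. x \<in> S \<Longrightarrow> proj_root_mult (homx P x) (fin t) m \<longleftrightarrow> root_mult (evalx P x) t m"
    and PI: "\<And>x m. x \<in> S \<Longrightarrow> proj_root_mult (homx P x) pinf m \<longleftrightarrow> 0 < k \<and> m = k"
    and ZP: "\<And>x p. (x, p) \<in> Z_RP1 P S \<longleftrightarrow> x \<in> S \<and> ((\<exists>t. p = fin t \<and> poly (evalx P x) t = 0) \<or> (p = pinf \<and> 0 < k))"
    and pd: "proj_delineable P S"
  shows "delineable P S"
proof -
  obtain K :: nat and \<theta> :: "nat \<Rightarrow> real ^ 'n \<Rightarrow> rp1" and m :: "nat \<Rightarrow> nat"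
    where cont: "\<forall>l<K. continuous_on S (\<theta> l)"
    and Z: "Z_RP1 P S = (\<Union>l<K. {(x, \<theta> l x) | x. x \<in> S})"
    and dis: "\<forall>l<K. \<forall>l'<K. l \<noteq> l' \<longrightarrow> (\<forall>x\<in>S. \<theta> l x \<noteq> \<theta> l' x)"
    and mu: "\<forall>l<K. m l \<ge> 1 \<and> (\<forall>x\<in>S. proj_root_mult (homx P x) (\<theta> l x) (m l))"
    using pd unfolding proj_delineable_def by (elim exE conjE) (rule that; assumption)
  have finfib: "\<exists>l<K. \<theta> l x = fin t" if x: "x \<in> S" and t: "poly (evalx P x) t = 0" for x t
  proof -
    have "(x, fin t) \<in> Z_RP1 P S" using ZP x t by blast
    then show ?thesis using Z by auto
  qed
  have inffib: "\<exists>l<K. \<theta> l x = pinf" if x: "x \<in> S" and k: "0 < k" for x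
  proof -
    have "(x, pinf) \<in> Z_RP1 P S" using ZP x k by blast
    then show ?thesis using Z by auto
  qed
  have rm: "root_mult (evalx P x) (deh (\<theta> l x)) (m l)"
    if l: "l < K" and x: "x \<in> S" and ni: "\<theta> l x \<noteq> pinf" for l x
  proof -
    have "proj_root_mult (homx P x) (fin (deh (\<theta> l x))) (m l)"
      using mu l x fin_deh[OF ni] by simp
    then show ?thesis using PF[OF x] by simp
  qed
  have minf: "0 < k \<and> m l = k" if l: "l < K" and x: "x \<in> S" and i: "\<theta> l x = pinf" for l x
  proof -
    have "proj_root_mult (homx P x) (\<theta> l x) (m l)" using mu l x by blast
    then show ?thesis using i PI[OF x] by simp
  qed
  have Zsub: "(x, t) \<in> Z_R P S" if "x \<in> S" "root_mult (evalx P x) t mm" for x t mm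
    using that ZR_iff unfolding root_mult_def by blast
  show ?thesis
  proof (cases "0 < k \<and> S \<noteq> {}")
    case False
    have ni: "\<theta> l x \<noteq> pinf" if "l < K" "x \<in> S" for l x
      using minf[OF that] False that by auto
    define \<psi> where "\<psi> l x = deh (\<theta> l x)" for l x
    have "\<forall>l<K. continuous_on S (\<psi> l)"
    proof (intro allI impI)
      fix l assume l: "l < K"
      show "continuous_on S (\<psi> l)" unfolding \<psi>_def
      proof (rule continuous_on_compose2[OF continuous_deh])
        show "continuous_on S (\<theta> l)" using cont l by blast
        show "\<theta> l ` S \<subseteq> - {pinf}"
        proof
          fix y assume "y \<in> \<theta> l ` S"
          then obtain x where "x \<in> S" "y = \<theta> l x" by blast
          then show "y \<in> - {pinf}" using ni[OF l] by simp
        qed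
      qed
    qed
    moreover have "Z_R P S = (\<Union>l<K. {(x, \<psi> l x) | x. x \<in> S})"
    proof (intro set_eqI iffI)
      fix z assume "z \<in> Z_R P S"
      then obtain x t where z: "z = (x, t)" and x: "x \<in> S" and t: "poly (evalx P x) t = 0"
        using ZR_iff by (cases z) blast
      obtain l where "l < K" "\<theta> l x = fin t" using finfib[OF x t] by blast
      then have "l < K" "t = \<psi> l x" unfolding \<psi>_def by auto
      then show "z \<in> (\<Union>l<K. {(x, \<psi> l x) | x. x \<in> S})" using z x by blast
    next
      fix z assume "z \<in> (\<Union>l<K. {(x, \<psi> l x) | x. x \<in> S})"
      then obtain l x where l: "l < K" and x: "x \<in> S" and z: "z = (x, \<psi> l x)" by blast
      show "z \<in> Z_R P S" using Zsub[OF x rm[OF l x ni[OF l x]]] z unfolding \<psi>_def by simp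
    qed
    moreover have "\<forall>l<K. \<forall>l'<K. l \<noteq> l' \<longrightarrow> (\<forall>x\<in>S. \<psi> l x \<noteq> \<psi> l' x)"
    proof (intro allI impI ballI)
      fix l l' x assume l: "l < K" and l': "l' < K" and ne: "l \<noteq> l'" and x: "x \<in> S"
      have "\<theta> l x \<noteq> \<theta> l' x" using dis l l' ne x by blast
      then show "\<psi> l x \<noteq> \<psi> l' x"
        unfolding \<psi>_def using fin_deh[OF ni[OF l x]] fin_deh[OF ni[OF l' x]] by metis
    qed
    moreover have "\<forall>l<K. m l \<ge> 1 \<and> (\<forall>x\<in>S. root_mult (evalx P x) (\<psi> l x) (m l))"
    proof (intro allI impI conjI ballI)
      fix l assume l: "l < K"
      show "m l \<ge> 1" using mu l by blast
      fix x assume x: "x \<in> S"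
      show "root_mult (evalx P x) (\<psi> l x) (m l)" using rm[OF l x ni[OF l x]] unfolding \<psi>_def .
    qed
    ultimately have F: "(\<forall>l<K. continuous_on S (\<psi> l)) \<and> Z_R P S = (\<Union>l<K. {(x, \<psi> l x) | x. x \<in> S}) \<and>
        (\<forall>l<K. \<forall>l'<K. l \<noteq> l' \<longrightarrow> (\<forall>x\<in>S. \<psi> l x \<noteq> \<psi> l' x)) \<and>
        (\<forall>l<K. m l \<ge> 1 \<and> (\<forall>x\<in>S. root_mult (evalx P x) (\<psi> l x) (m l)))" by (intro conjI)
    show ?thesis unfolding delineable_def by (rule exI[of _ K], rule exI[of _ \<psi>], rule exI[of _ m]) (rule F)
  next
    case True
    then have k: "0 < k" by simp
    from True obtain x0 where x0: "x0 \<in> S" by blast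
    obtain l0 where l0: "l0 < K" "\<theta> l0 x0 = pinf" using inffib[OF x0 k] by blast
    have ml0: "m l0 = k" using minf[OF l0(1) x0 l0(2)] by simp
    define g where "g i = (if i < l0 then i else Suc i)" for i
    define J where "J i x = (if \<theta> (g i) x = pinf then l0 else g i)" for i x
    define \<psi> where "\<psi> i x = deh (\<theta> (J i x) x)" for i x
    define \<mu> where "\<mu> i = m (g i)" for i
    have gK: "g i < K" "g i \<noteq> l0" if "i < K - 1" for i
      using that l0 unfolding g_def by auto
    have gsurj: "\<exists>i<K - 1. g i = l" if "l < K" "l \<noteq> l0" for l
    proof (cases "l < l0")
      case True
      then show ?thesis using that l0 unfolding g_def by (intro exI[of _ l]) auto
    next
      case False
      then show ?thesis using that l0 unfolding g_def by (intro exI[of _ "l - 1"]) auto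
    qed
    have ginj: "g i = g i' \<Longrightarrow> i = i'" for i i'
      unfolding g_def by (auto split: if_splits)
    have JK: "J i x < K" if "i < K - 1" for i x
      using gK[OF that] l0 unfolding J_def by auto
    have Jni: "\<theta> (J i x) x \<noteq> pinf" if i: "i < K - 1" and x: "x \<in> S" for i x
    proof (cases "\<theta> (g i) x = pinf")
      case True
      then have "\<theta> l0 x \<noteq> \<theta> (g i) x" using dis gK[OF i] l0 x by metis
      then show ?thesis using True unfolding J_def by simp
    next
      case False
      then show ?thesis unfolding J_def by simp
    qed
    have Jm: "m (J i x) = \<mu> i" if i: "i < K - 1" and x: "x \<in> S" for i x
    proof (cases "\<theta> (g i) x = pinf")
      case True
      then have "m (g i) = k" using minf[OF gK(1)[OF i] x] by simp
      then show ?thesis using True ml0 unfolding J_def \<mu>_def by simp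
    next
      case False
      then show ?thesis unfolding J_def \<mu>_def by simp
    qed
    have Jrm: "root_mult (evalx P x) (\<psi> i x) (\<mu> i)" if i: "i < K - 1" and x: "x \<in> S" for i x
      using rm[OF JK[OF i] x Jni[OF i x]] Jm[OF i x] unfolding \<psi>_def by simp
    have closedA: "closedin (top_of_set S) (S \<inter> \<theta> l -` {pinf})" if "l < K" for l
      by (rule continuous_closedin_preimage) (use cont that closed_inf in auto)
    have "\<forall>i<K - 1. continuous_on S (\<psi> i)"
    proof (intro allI impI)
      fix i assume i: "i < K - 1"
      define A where "A = S \<inter> \<theta> (g i) -` {pinf}"
      define B where "B = (\<Union>l\<in>{l. l < K \<and> l \<noteq> g i}. S \<inter> \<theta> l -` {pinf})"
      have SAB: "S = A \<union> B"
      proof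
        show "S \<subseteq> A \<union> B"
        proof
          fix x assume x: "x \<in> S"
          obtain l where "l < K" "\<theta> l x = pinf" using inffib[OF x k] by blast
          then show "x \<in> A \<union> B" using x unfolding A_def B_def by (cases "l = g i") auto
        qed
      qed (auto simp: A_def B_def)
      have AB: "x \<in> A \<longleftrightarrow> \<theta> (g i) x = pinf" if "x \<in> S" for x
        using that unfolding A_def by simp
      have BA: "x \<in> B \<longleftrightarrow> \<theta> (g i) x \<noteq> pinf" if x: "x \<in> S" for x
      proof
        assume "x \<in> B"
        then obtain l where "l < K" "l \<noteq> g i" "\<theta> l x = pinf" unfolding B_def by blast
        then show "\<theta> (g i) x \<noteq> pinf" using dis gK[OF i] x by metis
      next
        assume "\<theta> (g i) x \<noteq> pinf"
        then have "x \<notin> A" using AB x by simp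
        then show "x \<in> B" using SAB x by blast
      qed
      have cA: "closedin (top_of_set S) A" unfolding A_def using closedA gK[OF i] by blast
      have cB: "closedin (top_of_set S) B" unfolding B_def
        by (rule closedin_Union) (use closedA in auto)
      have c1: "continuous_on A (\<lambda>x. deh (\<theta> l0 x))"
      proof (rule continuous_on_compose2[OF continuous_deh])
        show "continuous_on A (\<theta> l0)"
          using cont l0 by (rule_tac continuous_on_subset[of S]) (auto simp: A_def)
        show "\<theta> l0 ` A \<subseteq> - {pinf}"
        proof
          fix y assume "y \<in> \<theta> l0 ` A"
          then obtain x where x: "x \<in> A" "y = \<theta> l0 x" by blast
          then have "x \<in> S" "\<theta> (g i) x = pinf" unfolding A_def by auto
          then have "\<theta> l0 x \<noteq> pinf" using dis gK[OF i] l0 by metis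
          then show "y \<in> - {pinf}" using x by simp
        qed
      qed
      have c2: "continuous_on B (\<lambda>x. deh (\<theta> (g i) x))"
      proof (rule continuous_on_compose2[OF continuous_deh])
        show "continuous_on B (\<theta> (g i))"
          using cont gK[OF i] SAB by (rule_tac continuous_on_subset[of S]) auto
        show "\<theta> (g i) ` B \<subseteq> - {pinf}"
        proof
          fix y assume "y \<in> \<theta> (g i) ` B"
          then obtain x where x: "x \<in> B" "y = \<theta> (g i) x" by blast
          then have "x \<in> S" using SAB by blast
          then show "y \<in> - {pinf}" using BA x by simp
        qed
      qed
      have "continuous_on (A \<union> B) (\<lambda>x. if \<theta> (g i) x = pinf then deh (\<theta> l0 x) else deh (\<theta> (g i) x))"
      proof (rule continuous_on_cases_local)
        show "closedin (top_of_set (A \<union> B)) A" using cA SAB by simp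
        show "closedin (top_of_set (A \<union> B)) B" using cB SAB by simp
        fix x assume "x \<in> A \<and> \<not> \<theta> (g i) x = pinf \<or> x \<in> B \<and> \<theta> (g i) x = pinf"
        then show "deh (\<theta> l0 x) = deh (\<theta> (g i) x)" using AB BA SAB by blast
      qed (use c1 c2 in auto)
      moreover have "\<psi> i x = (if \<theta> (g i) x = pinf then deh (\<theta> l0 x) else deh (\<theta> (g i) x))" for x
        unfolding \<psi>_def J_def by simp
      ultimately show "continuous_on S (\<psi> i)" using SAB by (simp add: fun_eq_iff[symmetric])
    qed
    moreover have "Z_R P S = (\<Union>i<K - 1. {(x, \<psi> i x) | x. x \<in> S})"
    proof (intro set_eqI iffI)
      fix z assume "z \<in> Z_R P S"
      then obtain x t where z: "z = (x, t)" and x: "x \<in> S" and t: "poly (evalx P x) t = 0"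
        using ZR_iff by (cases z) blast
      obtain l where l: "l < K" "\<theta> l x = fin t" using finfib[OF x t] by blast
      obtain j0 where j0: "j0 < K" "\<theta> j0 x = pinf" using inffib[OF x k] by blast
      have "\<exists>i<K - 1. \<psi> i x = t"
      proof (cases "l = l0")
        case False
        then obtain i where i: "i < K - 1" "g i = l" using gsurj l by blast
        then have "\<theta> (g i) x \<noteq> pinf" using l fin_ne_inf by simp
        then have "\<psi> i x = t" using i l unfolding \<psi>_def J_def by simp
        then show ?thesis using i by blast
      next
        case True
        then have "j0 \<noteq> l0" using j0 l fin_ne_inf by metis
        then obtain i where i: "i < K - 1" "g i = j0" using gsurj j0 by blast
        then have "\<psi> i x = t" using j0 l True unfolding \<psi>_def J_def by simp
        then show ?thesis using i by blast
      qed
      then show "z \<in> (\<Union>i<K - 1. {(x, \<psi> i x) | x. x \<in> S})" using z x by blast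
    next
      fix z assume "z \<in> (\<Union>i<K - 1. {(x, \<psi> i x) | x. x \<in> S})"
      then obtain i x where i: "i < K - 1" and x: "x \<in> S" and z: "z = (x, \<psi> i x)" by blast
      show "z \<in> Z_R P S" using Zsub[OF x Jrm[OF i x]] z by simp
    qed
    moreover have "\<forall>i<K - 1. \<forall>i'<K - 1. i \<noteq> i' \<longrightarrow> (\<forall>x\<in>S. \<psi> i x \<noteq> \<psi> i' x)"
    proof (intro allI impI ballI)
      fix i i' x assume i: "i < K - 1" and i': "i' < K - 1" and ne: "i \<noteq> i'" and x: "x \<in> S"
      have gne: "g i \<noteq> g i'" using ginj ne by blast
      have "J i x \<noteq> J i' x"
      proof (cases "\<theta> (g i) x = pinf"; cases "\<theta> (g i') x = pinf")
        assume "\<theta> (g i) x = pinf" "\<theta> (g i') x = pinf"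
        then show ?thesis using dis gK[OF i] gK[OF i'] gne x by metis
      qed (use gK[OF i] gK[OF i'] gne in \<open>auto simp: J_def\<close>)
      then have "\<theta> (J i x) x \<noteq> \<theta> (J i' x) x" using dis JK[OF i] JK[OF i'] x by blast
      then show "\<psi> i x \<noteq> \<psi> i' x"
        unfolding \<psi>_def using fin_deh[OF Jni[OF i x]] fin_deh[OF Jni[OF i' x]] by metis
    qed
    moreover have "\<forall>i<K - 1. \<mu> i \<ge> 1 \<and> (\<forall>x\<in>S. root_mult (evalx P x) (\<psi> i x) (\<mu> i))"
    proof (intro allI impI conjI ballI)
      fix i assume i: "i < K - 1"
      show "\<mu> i \<ge> 1" using mu gK(1)[OF i] unfolding \<mu>_def by blast
      fix x assume x: "x \<in> S"
      show "root_mult (evalx P x) (\<psi> i x) (\<mu> i)" by (rule Jrm[OF i x])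
    qed
    ultimately have F: "(\<forall>i<K - 1. continuous_on S (\<psi> i)) \<and> Z_R P S = (\<Union>i<K - 1. {(x, \<psi> i x) | x. x \<in> S}) \<and>
        (\<forall>i<K - 1. \<forall>i'<K - 1. i \<noteq> i' \<longrightarrow> (\<forall>x\<in>S. \<psi> i x \<noteq> \<psi> i' x)) \<and>
        (\<forall>i<K - 1. \<mu> i \<ge> 1 \<and> (\<forall>x\<in>S. root_mult (evalx P x) (\<psi> i x) (\<mu> i)))" by (intro conjI)
    show ?thesis unfolding delineable_def by (rule exI[of _ "K - 1"], rule exI[of _ \<psi>], rule exI[of _ \<mu>]) (rule F)
  qed
qed


theorem mainTheorem5:
  fixes P :: "(real ^ 'n \<Rightarrow> real) poly" and S :: "(real ^ 'n) set"
  assumes "is_mpoly P"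
    and "\<exists>k\<le>degree P. \<forall>x\<in>S. coeff P (degree P - k) x \<noteq> 0 \<and>
                              (\<forall>j<k. coeff P (degree P - j) x = 0)"
  shows "proj_delineable P S \<longleftrightarrow> delineable P S"
proof -
  obtain k where kd: "k \<le> degree P"
    and hk: "\<forall>x\<in>S. coeff P (degree P - k) x \<noteq> 0 \<and> (\<forall>j<k. coeff P (degree P - j) x = 0)"
    using assms(2) by blast
  have E: "evalx P x \<noteq> 0" "degree (evalx P x) = degree P - k" if "x \<in> S" for x
    using good_evalx[OF kd] hk that by auto
  have PF: "proj_root_mult (homx P x) (fin t) m \<longleftrightarrow> root_mult (evalx P x) t m"
    if x: "x \<in> S" for x t m
    unfolding homx_hz by (rule prm_fin[OF E(1)[OF x] kd E(2)[OF x]])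
  have PI: "proj_root_mult (homx P x) pinf m \<longleftrightarrow> 0 < k \<and> m = k"
    if x: "x \<in> S" for x m
    unfolding homx_hz by (rule prm_inf[OF E(1)[OF x] kd E(2)[OF x]])
  have ZP: "(x, p) \<in> Z_RP1 P S \<longleftrightarrow> x \<in> S \<and> ((\<exists>t. p = fin t \<and> poly (evalx P x) t = 0) \<or> (p = pinf \<and> 0 < k))"
    for x p
  proof (cases "x \<in> S")
    case True
    show ?thesis using zfib[OF E(1)[OF True] kd E(2)[OF True], of p] True
      unfolding Z_RP1_def Hom_homE by simp
  next
    case False
    then show ?thesis by (simp add: Z_RP1_def)
  qed
  show ?thesis using fwd[of S P k, OF PF PI ZP] bwd[of S P k, OF PF PI ZP] by blast
qed

end
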